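(* For any fence $F$, $\dim I_H(F)=\dim A_H(F)$.
   Context: A fence $\breve F(\alpha_1,\dots,\alpha_t)$ ($t\ge2$, positive integers, $\alpha_1,\alpha_t\ge2$) is the poset on $\{x_1,\dots,x_n\}$, $n=\alpha_1+\dots+\alpha_t-1$, with $a_i=\alpha_1+\dots+\alpha_i$, $a_0=0$, whose cover relations are: for $1\le j\le n-1$ with $a_{i-1}\le j<a_i$, $x_j\lessdot x_{j+1}$ if $i$ odd and $x_j\gtrdot x_{j+1}$ if $i$ even. $\mathcal J(F)$ is the set of order ideals; rowmotion $\rho$ sends $I$ to the order ideal generated by $\min(F\setminus I)$. A statistic $f:\mathcal J(F)\to\mathbb R$ is homomesic under rowmotion if its average over every $\rho$-orbit is the same constant. $\hat\chi_q(I)=1$ if $q\in I$, else 0; $\chi_q(I)=1$ if $q\in\max(I)$, else 0. $I_H(F)$ (resp. $A_H(F)$) is the subspace of $\operatorname{Span}_{\mathbb R}\{\hat\chi_q:q\in F\}$ (resp. $\operatorname{Span}_{\mathbb R}\{\chi_q:q\in F\}$) consisting of statistics homomesic under rowmotion. *)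

theory Defs
  imports Complex_Main "HOL-Library.Function_Algebras"
begin

(* A fence F(alpha_1,...,alpha_t) is encoded by the list alpha = [alpha_1,...,alpha_t]. *)
definition is_fence_comp :: "nat list \<Rightarrow> bool" where
  "is_fence_comp \<alpha> \<longleftrightarrow> length \<alpha> \<ge> 2 \<and> (\<forall>a\<in>set \<alpha>. a \<ge> 1) \<and> hd \<alpha> \<ge> 2 \<and> last \<alpha> \<ge> 2"

definition fence_a :: "nat list \<Rightarrow> nat \<Rightarrow> nat" where
  "fence_a \<alpha> i = sum_list (take i \<alpha>)"

definition fence_n :: "nat list \<Rightarrow> nat" where
  "fence_n \<alpha> = sum_list \<alpha> - 1"

(* elements x_1,...,x_n encoded as 1..n *)
definition fence_elems :: "nat list \<Rightarrow> nat set" where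
  "fence_elems \<alpha> = {1..fence_n \<alpha>}"

definition fence_seg :: "nat list \<Rightarrow> nat \<Rightarrow> nat" where
  "fence_seg \<alpha> j = (LEAST i. j < fence_a \<alpha> i)"

(* cover relations: (x, y) \<in> fence_cover means x \<lessdot> y *)
definition fence_cover :: "nat list \<Rightarrow> (nat \<times> nat) set" where
  "fence_cover \<alpha> =
     {(j, j + 1) | j. 1 \<le> j \<and> j \<le> fence_n \<alpha> - 1 \<and> odd (fence_seg \<alpha> j)} \<union>
     {(j + 1, j) | j. 1 \<le> j \<and> j \<le> fence_n \<alpha> - 1 \<and> even (fence_seg \<alpha> j)}"

definition fence_le :: "nat list \<Rightarrow> nat \<Rightarrow> nat \<Rightarrow> bool" where
  "fence_le \<alpha> x y \<longleftrightarrow> (x, y) \<in> (fence_cover \<alpha>)\<^sup>*"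

definition fence_ideals :: "nat list \<Rightarrow> nat set set" where
  "fence_ideals \<alpha> = {I. I \<subseteq> fence_elems \<alpha> \<and>
      (\<forall>x\<in>I. \<forall>y\<in>fence_elems \<alpha>. fence_le \<alpha> y x \<longrightarrow> y \<in> I)}"

definition fence_min :: "nat list \<Rightarrow> nat set \<Rightarrow> nat set" where
  "fence_min \<alpha> S = {x\<in>S. \<forall>y\<in>S. fence_le \<alpha> y x \<longrightarrow> y = x}"

definition fence_max :: "nat list \<Rightarrow> nat set \<Rightarrow> nat set" where
  "fence_max \<alpha> S = {x\<in>S. \<forall>y\<in>S. fence_le \<alpha> x y \<longrightarrow> y = x}"

definition rowmotion :: "nat list \<Rightarrow> nat set \<Rightarrow> nat set" where
  "rowmotion \<alpha> I = {y\<in>fence_elems \<alpha>. \<exists>x\<in>fence_min \<alpha> (fence_elems \<alpha> - I). fence_le \<alpha> y x}"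

definition row_orbit :: "nat list \<Rightarrow> nat set \<Rightarrow> nat set set" where
  "row_orbit \<alpha> I = {(rowmotion \<alpha> ^^ k) I | k. True}"

definition homomesic :: "nat list \<Rightarrow> (nat set \<Rightarrow> real) \<Rightarrow> bool" where
  "homomesic \<alpha> f \<longleftrightarrow> (\<exists>c. \<forall>I\<in>fence_ideals \<alpha>.
      (\<Sum>J\<in>row_orbit \<alpha> I. f J) / real (card (row_orbit \<alpha> I)) = c)"

definition hchi :: "nat \<Rightarrow> nat set \<Rightarrow> real" where
  "hchi q I = (if q \<in> I then 1 else 0)"

definition chi :: "nat list \<Rightarrow> nat \<Rightarrow> nat set \<Rightarrow> real" where
  "chi \<alpha> q I = (if q \<in> fence_max \<alpha> I then 1 else 0)"

definition stat_scale :: "real \<Rightarrow> (nat set \<Rightarrow> real) \<Rightarrow> (nat set \<Rightarrow> real)" where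
  "stat_scale c f = (\<lambda>I. c * f I)"

definition IH_space :: "nat list \<Rightarrow> (nat set \<Rightarrow> real) set" where
  "IH_space \<alpha> = {f \<in> module.span stat_scale (hchi ` fence_elems \<alpha>). homomesic \<alpha> f}"

definition AH_space :: "nat list \<Rightarrow> (nat set \<Rightarrow> real) set" where
  "AH_space \<alpha> = {f \<in> module.span stat_scale (chi \<alpha> ` fence_elems \<alpha>). homomesic \<alpha> f}"

end

theory Submission
  imports Defs
begin


lemma cover_iff: "(x, y) \<in> fence_cover \<alpha> \<longleftrightarrow>
   (y = x + 1 \<and> 1 \<le> x \<and> x \<le> fence_n \<alpha> - 1 \<and> odd (fence_seg \<alpha> x)) \<or>
   (x = y + 1 \<and> 1 \<le> y \<and> y \<le> fence_n \<alpha> - 1 \<and> even (fence_seg \<alpha> y))"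
  unfolding fence_cover_def by auto

lemma cover_elems: "(x, y) \<in> fence_cover \<alpha> \<Longrightarrow> x \<in> fence_elems \<alpha> \<and> y \<in> fence_elems \<alpha>"
  unfolding cover_iff fence_elems_def by auto

lemma cover_adj: "(x, y) \<in> fence_cover \<alpha> \<Longrightarrow> y = x + 1 \<or> x = y + 1"
  unfolding cover_iff by auto

lemma cover_not_both: "(x, x+1) \<in> fence_cover \<alpha> \<Longrightarrow> (x+1, x) \<notin> fence_cover \<alpha>"
  unfolding cover_iff by auto

lemma cover_asym: "(x, y) \<in> fence_cover \<alpha> \<Longrightarrow> (y, x) \<notin> fence_cover \<alpha>"
  using cover_adj cover_not_both by (metis)

definition "goodrel \<alpha> = {(x,y). (x < y \<and> (\<forall>j. x \<le> j \<and> j < y \<longrightarrow> (j, j+1) \<in> fence_cover \<alpha>))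
   \<or> (y < x \<and> (\<forall>j. y \<le> j \<and> j < x \<longrightarrow> (j+1, j) \<in> fence_cover \<alpha>))}"

lemma trancl_good: "(x, y) \<in> (fence_cover \<alpha>)\<^sup>+ \<Longrightarrow> (x, y) \<in> goodrel \<alpha>"
proof (induction rule: trancl_induct)
  case (base y)
  then show ?case using cover_adj[OF base] unfolding goodrel_def
    by (auto simp: le_Suc_eq less_Suc_eq_le)
next
  case (step y z)
  from cover_adj[OF step(2)] show ?case
  proof
    assume z: "z = y + 1"
    show ?thesis using step(3) step(2) z cover_not_both[of y \<alpha>] unfolding goodrel_def
      apply (auto simp: less_Suc_eq)
      done
  next
    assume z: "y = z + 1"
    show ?thesis using step(3) step(2) z cover_not_both[of z \<alpha>] unfolding goodrel_def
      apply (auto simp: less_Suc_eq)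
      by (metis le_antisym not_less_eq_eq)
  qed
qed

lemma trancl_irrefl: "(x, x) \<notin> (fence_cover \<alpha>)\<^sup>+"
  using trancl_good[of x x \<alpha>] unfolding goodrel_def by auto

lemma acyc: "acyclic (fence_cover \<alpha>)"
  unfolding acyclic_def using trancl_irrefl by blast

lemma fin_cover: "finite (fence_cover \<alpha>)"
proof -
  have "fence_cover \<alpha> \<subseteq> fence_elems \<alpha> \<times> fence_elems \<alpha>"
  proof (rule subrelI)
    fix x y assume "(x, y) \<in> fence_cover \<alpha>"
    then show "(x, y) \<in> fence_elems \<alpha> \<times> fence_elems \<alpha>" using cover_elems by blast
  qed
  then show ?thesis by (rule finite_subset) (simp add: fence_elems_def)
qed

lemma wf_cover: "wf (fence_cover \<alpha>)"
  by (rule finite_acyclic_wf[OF fin_cover acyc])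

lemma wf_cover_conv: "wf ((fence_cover \<alpha>)\<inverse>)"
  by (rule finite_acyclic_wf_converse[OF fin_cover acyc])

lemma fle_refl: "fence_le \<alpha> x x"
  unfolding fence_le_def by auto

lemma fle_trans: "fence_le \<alpha> x y \<Longrightarrow> fence_le \<alpha> y z \<Longrightarrow> fence_le \<alpha> x z"
  unfolding fence_le_def by auto

lemma fle_antisym: "fence_le \<alpha> x y \<Longrightarrow> fence_le \<alpha> y x \<Longrightarrow> x = y"
proof (rule ccontr)
  assume a: "fence_le \<alpha> x y" "fence_le \<alpha> y x" "x \<noteq> y"
  then have "(x, y) \<in> (fence_cover \<alpha>)\<^sup>+" unfolding fence_le_def by (simp add: rtrancl_eq_or_trancl)
  moreover have "(y, x) \<in> (fence_cover \<alpha>)\<^sup>*" using a unfolding fence_le_def by simp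
  ultimately have "(x, x) \<in> (fence_cover \<alpha>)\<^sup>+" by (rule trancl_rtrancl_trancl)
  then show False using trancl_irrefl by blast
qed

lemma cover_le: "(x, y) \<in> fence_cover \<alpha> \<Longrightarrow> fence_le \<alpha> x y"
  unfolding fence_le_def by auto

lemma le_first_step: "fence_le \<alpha> x y \<Longrightarrow> x \<noteq> y \<Longrightarrow> \<exists>u. (x, u) \<in> fence_cover \<alpha> \<and> fence_le \<alpha> u y"
  unfolding fence_le_def by (metis converse_rtranclE)

lemma le_last_step: "fence_le \<alpha> x y \<Longrightarrow> x \<noteq> y \<Longrightarrow> \<exists>d. (d, y) \<in> fence_cover \<alpha> \<and> fence_le \<alpha> x d"
  unfolding fence_le_def by (metis rtranclE)

lemma le_strict_trancl: "fence_le \<alpha> x y \<Longrightarrow> x \<noteq> y \<Longrightarrow> (x, y) \<in> (fence_cover \<alpha>)\<^sup>+"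
  unfolding fence_le_def by (metis rtrancl_eq_or_trancl)

lemma cover_neq: "(x, y) \<in> fence_cover \<alpha> \<Longrightarrow> x \<noteq> y"
  using cover_adj by fastforce

lemma max_char:
  assumes I: "I \<in> fence_ideals \<alpha>"
  shows "q \<in> fence_max \<alpha> I \<longleftrightarrow> q \<in> I \<and> (\<forall>u. (q, u) \<in> fence_cover \<alpha> \<longrightarrow> u \<notin> I)"
proof
  assume "q \<in> fence_max \<alpha> I"
  then show "q \<in> I \<and> (\<forall>u. (q, u) \<in> fence_cover \<alpha> \<longrightarrow> u \<notin> I)"
    unfolding fence_max_def using cover_le cover_neq by fastforce
next
  assume h: "q \<in> I \<and> (\<forall>u. (q, u) \<in> fence_cover \<alpha> \<longrightarrow> u \<notin> I)"
  have "y = q" if y1: "y \<in> I" and y2: "fence_le \<alpha> q y" for y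
  proof (rule ccontr)
    assume "y \<noteq> q"
    then obtain u where u: "(q, u) \<in> fence_cover \<alpha>" "fence_le \<alpha> u y"
      using le_first_step[OF y2] by metis
    then have "u \<in> I" using I y1 cover_elems[OF u(1)] unfolding fence_ideals_def by blast
    then show False using h u by blast
  qed
  then show "q \<in> fence_max \<alpha> I" using h unfolding fence_max_def by blast
qed

lemma min_char:
  assumes I: "I \<in> fence_ideals \<alpha>" and q: "q \<in> fence_elems \<alpha>"
  shows "q \<in> fence_min \<alpha> (fence_elems \<alpha> - I) \<longleftrightarrow> q \<notin> I \<and> (\<forall>d. (d, q) \<in> fence_cover \<alpha> \<longrightarrow> d \<in> I)"
proof
  assume "q \<in> fence_min \<alpha> (fence_elems \<alpha> - I)"
  then show "q \<notin> I \<and> (\<forall>d. (d, q) \<in> fence_cover \<alpha> \<longrightarrow> d \<in> I)"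
    unfolding fence_min_def using cover_le cover_neq cover_elems by fastforce
next
  assume h: "q \<notin> I \<and> (\<forall>d. (d, q) \<in> fence_cover \<alpha> \<longrightarrow> d \<in> I)"
  have "y = q" if y1: "y \<in> fence_elems \<alpha> - I" and y2: "fence_le \<alpha> y q" for y
  proof (rule ccontr)
    assume "y \<noteq> q"
    then obtain d where d: "(d, q) \<in> fence_cover \<alpha>" "fence_le \<alpha> y d"
      using le_last_step[OF y2] by metis
    then have "d \<in> I" using h by blast
    then have "y \<in> I" using I y1 d(2) unfolding fence_ideals_def by blast
    then show False using y1 by blast
  qed
  then show "q \<in> fence_min \<alpha> (fence_elems \<alpha> - I)" using h q unfolding fence_min_def by blast
qed

lemma max_row: "fence_max \<alpha> (rowmotion \<alpha> I) = fence_min \<alpha> (fence_elems \<alpha> - I)"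
proof (intro set_eqI iffI)
  fix x assume x: "x \<in> fence_max \<alpha> (rowmotion \<alpha> I)"
  then obtain x' where x': "x' \<in> fence_min \<alpha> (fence_elems \<alpha> - I)" "fence_le \<alpha> x x'" "x \<in> fence_elems \<alpha>"
    unfolding fence_max_def rowmotion_def by blast
  then have "x' \<in> rowmotion \<alpha> I" unfolding rowmotion_def fence_min_def using fle_refl by blast
  then have "x' = x" using x x'(2) unfolding fence_max_def by blast
  then show "x \<in> fence_min \<alpha> (fence_elems \<alpha> - I)" using x' by simp
next
  fix x assume x: "x \<in> fence_min \<alpha> (fence_elems \<alpha> - I)"
  have "x \<in> rowmotion \<alpha> I" using x fle_refl unfolding rowmotion_def fence_min_def by blast
  moreover have "y = x" if y1: "y \<in> rowmotion \<alpha> I" and y2: "fence_le \<alpha> x y" for y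
  proof -
    obtain x' where x': "x' \<in> fence_min \<alpha> (fence_elems \<alpha> - I)" "fence_le \<alpha> y x'"
      using y1 unfolding rowmotion_def by blast
    have "fence_le \<alpha> x x'" using fle_trans y2 x'(2) by blast
    then have "x = x'" using x x'(1) unfolding fence_min_def by blast
    then show "y = x" using fle_antisym y2 x'(2) by blast
  qed
  ultimately show "x \<in> fence_max \<alpha> (rowmotion \<alpha> I)" unfolding fence_max_def by blast
qed

lemma row_ideal: "rowmotion \<alpha> I \<in> fence_ideals \<alpha>"
  unfolding fence_ideals_def rowmotion_def using fle_trans by blast

lemma ideal_repr:
  assumes I: "I \<in> fence_ideals \<alpha>"
  shows "I = fence_elems \<alpha> - {y \<in> fence_elems \<alpha>. \<exists>x\<in>fence_min \<alpha> (fence_elems \<alpha> - I). fence_le \<alpha> x y}"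
proof (intro set_eqI iffI)
  fix y assume y: "y \<in> I"
  then show "y \<in> fence_elems \<alpha> - {y \<in> fence_elems \<alpha>. \<exists>x\<in>fence_min \<alpha> (fence_elems \<alpha> - I). fence_le \<alpha> x y}"
    using I unfolding fence_ideals_def fence_min_def by blast
next
  fix y assume y: "y \<in> fence_elems \<alpha> - {y \<in> fence_elems \<alpha>. \<exists>x\<in>fence_min \<alpha> (fence_elems \<alpha> - I). fence_le \<alpha> x y}"
  show "y \<in> I"
  proof (rule ccontr)
    assume yI: "y \<notin> I"
    let ?Q = "{z \<in> fence_elems \<alpha> - I. fence_le \<alpha> z y}"
    have "y \<in> ?Q" using y yI fle_refl by blast
    obtain z where z: "z \<in> ?Q" and zmin: "\<And>w. (w, z) \<in> (fence_cover \<alpha>)\<^sup>+ \<Longrightarrow> w \<notin> ?Q"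
      using wfE_min[OF wf_trancl[OF wf_cover[of \<alpha>]] \<open>y \<in> ?Q\<close>] by blast
    have "z \<in> fence_min \<alpha> (fence_elems \<alpha> - I)"
      unfolding fence_min_def
    proof (intro CollectI conjI ballI impI)
      show "z \<in> fence_elems \<alpha> - I" using z by blast
      fix w assume w: "w \<in> fence_elems \<alpha> - I" "fence_le \<alpha> w z"
      show "w = z"
      proof (rule ccontr)
        assume "w \<noteq> z"
        then have "(w, z) \<in> (fence_cover \<alpha>)\<^sup>+" using le_strict_trancl w(2) by blast
        moreover have "fence_le \<alpha> w y" using fle_trans[OF w(2)] z by blast
        then have "w \<in> ?Q" using w by blast
        ultimately show False using zmin by blast
      qed
    qed
    moreover have "fence_le \<alpha> z y" using z by blast
    ultimately have "\<exists>x\<in>fence_min \<alpha> (fence_elems \<alpha> - I). fence_le \<alpha> x y" by blast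
    moreover have "y \<in> fence_elems \<alpha>" using y by blast
    ultimately show False using y by simp
  qed
qed

lemma row_inj: "inj_on (rowmotion \<alpha>) (fence_ideals \<alpha>)"
proof
  fix I J assume I: "I \<in> fence_ideals \<alpha>" and J: "J \<in> fence_ideals \<alpha>" and eq: "rowmotion \<alpha> I = rowmotion \<alpha> J"
  define rep where "rep M = fence_elems \<alpha> - {y \<in> fence_elems \<alpha>. \<exists>x\<in>M. fence_le \<alpha> x y}" for M
  have m: "fence_min \<alpha> (fence_elems \<alpha> - I) = fence_min \<alpha> (fence_elems \<alpha> - J)"
    using max_row[of \<alpha> I] max_row[of \<alpha> J] eq by simp
  have "I = rep (fence_min \<alpha> (fence_elems \<alpha> - I))" unfolding rep_def by (rule ideal_repr[OF I])
  also have "\<dots> = rep (fence_min \<alpha> (fence_elems \<alpha> - J))" using m by simp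
  also have "\<dots> = J" unfolding rep_def by (rule ideal_repr[OF J, symmetric])
  finally show "I = J" .
qed



lemma ideal_empty: "{} \<in> fence_ideals \<alpha>"
  unfolding fence_ideals_def by auto

lemma ideals_finite: "finite (fence_ideals \<alpha>)"
proof -
  have "fence_ideals \<alpha> \<subseteq> Pow (fence_elems \<alpha>)" unfolding fence_ideals_def by auto
  then show ?thesis by (rule finite_subset) (simp add: fence_elems_def)
qed

lemma iter_ideal: "I \<in> fence_ideals \<alpha> \<Longrightarrow> (rowmotion \<alpha> ^^ k) I \<in> fence_ideals \<alpha>"
  by (induction k) (simp_all add: row_ideal)

lemma orbit_sub: "I \<in> fence_ideals \<alpha> \<Longrightarrow> row_orbit \<alpha> I \<subseteq> fence_ideals \<alpha>"
  unfolding row_orbit_def using iter_ideal by blast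

lemma orbit_finite: "I \<in> fence_ideals \<alpha> \<Longrightarrow> finite (row_orbit \<alpha> I)"
  using orbit_sub ideals_finite finite_subset by blast

lemma orbit_mem: "I \<in> row_orbit \<alpha> I"
  unfolding row_orbit_def by (auto intro: exI[of _ 0])

lemma orbit_card_pos: "I \<in> fence_ideals \<alpha> \<Longrightarrow> card (row_orbit \<alpha> I) > 0"
  using orbit_finite orbit_mem card_gt_0_iff by blast

lemma orbit_closed: "rowmotion \<alpha> ` row_orbit \<alpha> I \<subseteq> row_orbit \<alpha> I"
proof
  fix x assume "x \<in> rowmotion \<alpha> ` row_orbit \<alpha> I"
  then obtain k where "x = rowmotion \<alpha> ((rowmotion \<alpha> ^^ k) I)" unfolding row_orbit_def by blast
  then have "x = (rowmotion \<alpha> ^^ Suc k) I" by simp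
  then show "x \<in> row_orbit \<alpha> I" unfolding row_orbit_def by blast
qed

lemma orbit_inj: "I \<in> fence_ideals \<alpha> \<Longrightarrow> inj_on (rowmotion \<alpha>) (row_orbit \<alpha> I)"
  using inj_on_subset[OF row_inj orbit_sub] by blast

lemma orbit_perm: "I \<in> fence_ideals \<alpha> \<Longrightarrow> rowmotion \<alpha> ` row_orbit \<alpha> I = row_orbit \<alpha> I"
  by (rule endo_inj_surj[OF orbit_finite orbit_closed orbit_inj])

lemma orbit_sum_shift:
  assumes "I \<in> fence_ideals \<alpha>"
  shows "(\<Sum>J\<in>row_orbit \<alpha> I. f (rowmotion \<alpha> J)) = (\<Sum>J\<in>row_orbit \<alpha> I. f J)"
proof -
  have "(\<Sum>J\<in>row_orbit \<alpha> I. f J) = (\<Sum>J\<in>rowmotion \<alpha> ` row_orbit \<alpha> I. f J)"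
    using orbit_perm[OF assms] by simp
  also have "\<dots> = (\<Sum>J\<in>row_orbit \<alpha> I. f (rowmotion \<alpha> J))"
    by (rule sum.reindex[OF orbit_inj[OF assms], unfolded comp_def])
  finally show ?thesis by simp
qed

definition avg :: "nat list \<Rightarrow> (nat set \<Rightarrow> real) \<Rightarrow> nat set \<Rightarrow> real" where
  "avg \<alpha> f I = (\<Sum>J\<in>row_orbit \<alpha> I. f J) / real (card (row_orbit \<alpha> I))"

definition Qm :: "nat list \<Rightarrow> (nat set \<Rightarrow> real) \<Rightarrow> (nat set \<Rightarrow> real)" where
  "Qm \<alpha> f = (\<lambda>I. if I \<in> fence_ideals \<alpha> then avg \<alpha> f I - avg \<alpha> f {} else 0)"

lemma avg_add: "avg \<alpha> (f + g) I = avg \<alpha> f I + avg \<alpha> g I"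
  unfolding avg_def by (simp add: sum.distrib add_divide_distrib)

lemma avg_scale: "avg \<alpha> (stat_scale c f) I = c * avg \<alpha> f I"
  unfolding avg_def stat_scale_def by (simp add: sum_distrib_left)

lemma avg_cong: "I \<in> fence_ideals \<alpha> \<Longrightarrow> (\<And>J. J \<in> fence_ideals \<alpha> \<Longrightarrow> f J = g J) \<Longrightarrow> avg \<alpha> f I = avg \<alpha> g I"
  unfolding avg_def using orbit_sub by (metis (no_types, lifting) subsetD sum.cong)

lemma avg_shift: "I \<in> fence_ideals \<alpha> \<Longrightarrow> avg \<alpha> (\<lambda>J. f (rowmotion \<alpha> J)) I = avg \<alpha> f I"
  unfolding avg_def using orbit_sum_shift by metis

lemma avg_const: "I \<in> fence_ideals \<alpha> \<Longrightarrow> avg \<alpha> (\<lambda>J. c) I = c"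
  unfolding avg_def using orbit_card_pos by fastforce

lemma avg_scale': "avg \<alpha> (\<lambda>I. c * f I) J = c * avg \<alpha> f J"
  using avg_scale[of \<alpha> c f J] unfolding stat_scale_def .

lemma vs: "vector_space stat_scale"
  by unfold_locales (simp_all add: stat_scale_def fun_eq_iff algebra_simps)

lemma Q_lin: "Vector_Spaces.linear stat_scale stat_scale (Qm \<alpha>)"
  unfolding Vector_Spaces.linear_iff using vs
  by (auto simp: Qm_def avg_add avg_scale' fun_eq_iff stat_scale_def algebra_simps)

lemma Q_cong: "(\<And>J. J \<in> fence_ideals \<alpha> \<Longrightarrow> f J = g J) \<Longrightarrow> Qm \<alpha> f = Qm \<alpha> g"
  unfolding Qm_def using avg_cong ideal_empty by (metis)

lemma Q_shift: "Qm \<alpha> (\<lambda>J. f (rowmotion \<alpha> J)) = Qm \<alpha> f"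
  unfolding Qm_def using avg_shift ideal_empty by (metis)

lemma Q_const: "Qm \<alpha> (\<lambda>J. c) = 0"
  unfolding Qm_def using avg_const ideal_empty by (auto simp: fun_eq_iff)

lemma homomesic_iff: "homomesic \<alpha> f \<longleftrightarrow> Qm \<alpha> f = 0"
proof
  assume "homomesic \<alpha> f"
  then obtain c where c: "\<And>I. I \<in> fence_ideals \<alpha> \<Longrightarrow> avg \<alpha> f I = c"
    unfolding homomesic_def avg_def by blast
  then show "Qm \<alpha> f = 0" unfolding Qm_def using ideal_empty by (auto simp: fun_eq_iff)
next
  assume "Qm \<alpha> f = 0"
  then have "\<And>I. I \<in> fence_ideals \<alpha> \<Longrightarrow> avg \<alpha> f I = avg \<alpha> f {}"
    unfolding Qm_def by (metis (mono_tags) eq_iff_diff_eq_0 zero_fun_def)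
  then show "homomesic \<alpha> f" unfolding homomesic_def avg_def by blast
qed



interpretation V: vector_space stat_scale by (rule vs)

definition Up :: "nat list \<Rightarrow> nat \<Rightarrow> nat set" where
  "Up \<alpha> q = {u. (q, u) \<in> fence_cover \<alpha>}"

lemma Up_sub: "Up \<alpha> q \<subseteq> {q+1, q-1}"
  using cover_adj unfolding Up_def by force

lemma Up_fin: "finite (Up \<alpha> q)"
  using Up_sub finite_subset by blast

lemma Up_elems: "Up \<alpha> q \<subseteq> fence_elems \<alpha>"
  using cover_elems unfolding Up_def by blast

lemma sum_fun_apply: "(\<Sum>u\<in>A. (f u :: nat set \<Rightarrow> real)) I = (\<Sum>u\<in>A. f u I)"
  by (induction A rule: infinite_finite_induct) auto

lemma chi_A:
  assumes q: "q \<in> fence_elems \<alpha>" and c: "card (Up \<alpha> q) \<le> 1" and I: "I \<in> fence_ideals \<alpha>"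
  shows "chi \<alpha> q I = hchi q I - (\<Sum>u\<in>Up \<alpha> q. hchi u I)"
proof -
  have "Up \<alpha> q = {} \<or> (\<exists>u. Up \<alpha> q = {u})"
    using c Up_fin[of \<alpha> q] by (metis One_nat_def card_1_singletonE card_0_eq le_SucE le_zero_eq)
  then show ?thesis
  proof
    assume e: "Up \<alpha> q = {}"
    then have "q \<in> fence_max \<alpha> I \<longleftrightarrow> q \<in> I" using max_char[OF I, of q] unfolding Up_def by auto
    then show ?thesis using e unfolding chi_def hchi_def by simp
  next
    assume "\<exists>u. Up \<alpha> q = {u}"
    then obtain u where u: "Up \<alpha> q = {u}" by blast
    then have cu: "(q, u) \<in> fence_cover \<alpha>" unfolding Up_def by blast
    have "q \<in> fence_max \<alpha> I \<longleftrightarrow> q \<in> I \<and> u \<notin> I" using max_char[OF I, of q] u unfolding Up_def by auto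
    moreover have "u \<in> I \<Longrightarrow> q \<in> I" using I q cover_le[OF cu] unfolding fence_ideals_def by blast
    ultimately show ?thesis using u unfolding chi_def hchi_def by auto
  qed
qed

lemma no_lower:
  assumes c: "\<not> card (Up \<alpha> q) \<le> 1"
  shows "(d, q) \<notin> fence_cover \<alpha>"
proof
  assume d: "(d, q) \<in> fence_cover \<alpha>"
  then have "d \<in> {q+1, q-1}" using cover_adj by force
  moreover have "d \<notin> Up \<alpha> q" using cover_asym[OF d] unfolding Up_def by blast
  ultimately have "Up \<alpha> q \<subseteq> {q+1, q-1} - {d}" using Up_sub by blast
  then have "card (Up \<alpha> q) \<le> card ({q+1, q-1} - {d})" by (rule card_mono[rotated]) simp
  also have "\<dots> \<le> 1" using \<open>d \<in> {q+1, q-1}\<close> by (cases "q + 1 = q - 1") auto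
  finally show False using c by simp
qed

lemma chi_B:
  assumes q: "q \<in> fence_elems \<alpha>" and c: "\<not> card (Up \<alpha> q) \<le> 1" and I: "I \<in> fence_ideals \<alpha>"
  shows "chi \<alpha> q (rowmotion \<alpha> I) = 1 - hchi q I"
proof -
  have "q \<in> fence_max \<alpha> (rowmotion \<alpha> I) \<longleftrightarrow> q \<notin> I"
    unfolding max_row using min_char[OF I q] no_lower[OF c] by blast
  then show ?thesis unfolding chi_def hchi_def by simp
qed

definition sv :: "nat list \<Rightarrow> nat \<Rightarrow> nat set \<Rightarrow> real" where
  "sv \<alpha> q = (if card (Up \<alpha> q) \<le> 1 then hchi q - (\<Sum>u\<in>Up \<alpha> q. hchi u) else - hchi q)"

lemma sv_span: "q \<in> fence_elems \<alpha> \<Longrightarrow> sv \<alpha> q \<in> V.span (hchi ` fence_elems \<alpha>)"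
proof (cases "card (Up \<alpha> q) \<le> 1")
  case True
  assume q: "q \<in> fence_elems \<alpha>"
  show ?thesis unfolding sv_def if_P[OF True]
    using Up_elems[of \<alpha> q] q by (intro V.span_diff V.span_sum V.span_base) auto
next
  case False
  assume q: "q \<in> fence_elems \<alpha>"
  show ?thesis unfolding sv_def if_not_P[OF False]
    using q by (intro V.span_neg V.span_base) auto
qed

lemma Q_sv:
  assumes q: "q \<in> fence_elems \<alpha>"
  shows "Qm \<alpha> (sv \<alpha> q) = Qm \<alpha> (chi \<alpha> q)"
proof (cases "card (Up \<alpha> q) \<le> 1")
  case True
  show ?thesis
    by (rule Q_cong) (unfold sv_def if_P[OF True], simp add: chi_A[OF q True] sum_fun_apply)
next
  case False
  interpret L: Vector_Spaces.linear stat_scale stat_scale "Qm \<alpha>" by (rule Q_lin)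
  have "Qm \<alpha> (chi \<alpha> q) = Qm \<alpha> (\<lambda>I. chi \<alpha> q (rowmotion \<alpha> I))" by (rule Q_shift[symmetric])
  also have "\<dots> = Qm \<alpha> ((\<lambda>I. 1) - hchi q)"
    by (rule Q_cong) (simp add: chi_B[OF q False])
  also have "\<dots> = Qm \<alpha> (\<lambda>I. 1) - Qm \<alpha> (hchi q)" by (rule L.diff)
  also have "\<dots> = Qm \<alpha> (- hchi q)" by (simp add: Q_const L.neg)
  finally show ?thesis unfolding sv_def if_not_P[OF False] by simp
qed

lemma hchi_span: "q \<in> fence_elems \<alpha> \<Longrightarrow> hchi q \<in> V.span (sv \<alpha> ` fence_elems \<alpha>)"
proof (induction q rule: wf_induct[OF wf_cover_conv[of \<alpha>]])
  case (1 q)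
  show ?case
  proof (cases "card (Up \<alpha> q) \<le> 1")
    case True
    have e: "hchi q = sv \<alpha> q + (\<Sum>u\<in>Up \<alpha> q. hchi u)" unfolding sv_def if_P[OF True] by simp
    have "hchi u \<in> V.span (sv \<alpha> ` fence_elems \<alpha>)" if "u \<in> Up \<alpha> q" for u
      using 1 that Up_elems unfolding Up_def by blast
    then show ?thesis unfolding e using 1(2)
      by (intro V.span_add V.span_sum) (auto intro: V.span_base)
  next
    case False
    have e: "hchi q = - sv \<alpha> q" unfolding sv_def if_not_P[OF False] by simp
    show ?thesis unfolding e using 1(2) by (intro V.span_neg V.span_base) auto
  qed
qed



lemma max_single: "fence_max \<alpha> {p} = {p}"
  unfolding fence_max_def by auto

lemma hchi_single: "hchi q {p} = (if q = p then 1 else 0)"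
  unfolding hchi_def by auto

lemma chi_single: "chi \<alpha> q {p} = (if q = p then 1 else 0)"
  unfolding chi_def max_single by auto

lemma delta_indep:
  fixes g :: "nat \<Rightarrow> nat set \<Rightarrow> real" and A :: "nat set"
  assumes fin: "finite A" and d: "\<And>p q. g q {p} = (if q = p then 1 else 0)"
  shows "inj_on g A" "V.independent (g ` A)"
proof -
  show inj: "inj_on g A"
  proof
    fix p q assume "g p = g q"
    then have e: "g p {p} = g q {p}" by simp
    show "p = q"
    proof (rule ccontr)
      assume "p \<noteq> q"
      then have "g q {p} = 0" using d by simp
      moreover have "g p {p} = 1" using d by simp
      ultimately show False using e by simp
    qed
  qed
  show "V.independent (g ` A)"
  proof (rule V.independent_if_scalars_zero)
    show "finite (g ` A)" using fin by simp
    fix f x assume s: "(\<Sum>x\<in>g ` A. stat_scale (f x) x) = 0" and x: "x \<in> g ` A"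
    then obtain q where q: "q \<in> A" "x = g q" by blast
    have "0 = (\<Sum>x\<in>g ` A. stat_scale (f x) x) {q}" using s by simp
    also have "\<dots> = (\<Sum>x\<in>g ` A. f x * x {q})" by (simp add: sum_fun_apply stat_scale_def)
    also have "\<dots> = (\<Sum>p\<in>A. f (g p) * g p {q})" by (rule sum.reindex[OF inj, unfolded comp_def])
    also have "\<dots> = (\<Sum>p\<in>A. if p = q then f (g p) else 0)" by (rule sum.cong) (auto simp: d)
    also have "\<dots> = f (g q)" using q(1) fin by simp
    finally show "f x = 0" using q by simp
  qed
qed

lemma fin_elems: "finite (fence_elems \<alpha>)"
  unfolding fence_elems_def by simp

definition Sm :: "nat list \<Rightarrow> (nat set \<Rightarrow> real) \<Rightarrow> (nat set \<Rightarrow> real)" where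
  "Sm \<alpha> f = (\<lambda>I. \<Sum>q\<in>fence_elems \<alpha>. f {q} * sv \<alpha> q I)"

lemma S_lin: "Vector_Spaces.linear stat_scale stat_scale (Sm \<alpha>)"
  unfolding Vector_Spaces.linear_iff using vs
  by (auto simp: Sm_def fun_eq_iff stat_scale_def algebra_simps sum.distrib sum_distrib_left)

lemma S_chi: "p \<in> fence_elems \<alpha> \<Longrightarrow> Sm \<alpha> (chi \<alpha> p) = sv \<alpha> p"
proof
  fix I assume p: "p \<in> fence_elems \<alpha>"
  have "Sm \<alpha> (chi \<alpha> p) I = (\<Sum>q\<in>fence_elems \<alpha>. if q = p then sv \<alpha> p I else 0)"
    unfolding Sm_def chi_single by (rule sum.cong) auto
  also have "\<dots> = sv \<alpha> p I" using p fin_elems by simp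
  finally show "Sm \<alpha> (chi \<alpha> p) I = sv \<alpha> p I" .
qed



lemma dim_inj_image:
  assumes lin: "Vector_Spaces.linear stat_scale stat_scale f"
    and inj: "inj_on f (V.span U)" and AU: "A \<subseteq> V.span U"
  shows "V.dim (f ` A) = V.dim A"
proof -
  interpret L: Vector_Spaces.linear stat_scale stat_scale f by (rule lin)
  obtain B where B: "B \<subseteq> A" "V.independent B" "A \<subseteq> V.span B" "card B = V.dim A"
    by (rule V.basis_exists)
  have spB: "V.span B \<subseteq> V.span U"
  proof -
    have "V.span B \<subseteq> V.span (V.span U)" using B(1) AU V.span_mono by blast
    then show ?thesis by (simp add: V.span_span)
  qed
  have injB: "inj_on f (V.span B)" using inj spB inj_on_subset by blast
  have indep: "V.independent (f ` B)" by (rule L.independent_injective_image[OF B(2) injB])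
  have "f ` A \<subseteq> f ` V.span B" using B(3) by blast
  then have "f ` A \<subseteq> V.span (f ` B)" using L.span_image by simp
  moreover have "card (f ` B) = card B"
    using card_image inj_on_subset[OF injB V.span_superset] by blast
  moreover have "f ` B \<subseteq> f ` A" using B(1) by blast
  ultimately show ?thesis
    using V.dim_unique[of "f ` B" "f ` A" "V.dim A"] B(4) indep by simp
qed

theorem theorem7p1:
  fixes \<alpha> :: "nat list"
  assumes "is_fence_comp \<alpha>"
  shows "vector_space.dim stat_scale (IH_space \<alpha>) = vector_space.dim stat_scale (AH_space \<alpha>)"
proof -
  interpret LS: Vector_Spaces.linear stat_scale stat_scale "Sm \<alpha>" by (rule S_lin)
  interpret LQ: Vector_Spaces.linear stat_scale stat_scale "Qm \<alpha>" by (rule Q_lin)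
  define F where "F = fence_elems \<alpha>"
  define Uh where "Uh = V.span (hchi ` F)"
  define Uc where "Uc = V.span (chi \<alpha> ` F)"
  have finF: "finite F" unfolding F_def by (rule fin_elems)
  have IH: "IH_space \<alpha> = Uh \<inter> {f. Qm \<alpha> f = 0}"
    unfolding IH_space_def Uh_def F_def using homomesic_iff by blast
  have AH: "AH_space \<alpha> = Uc \<inter> {f. Qm \<alpha> f = 0}"
    unfolding AH_space_def Uc_def F_def using homomesic_iff by blast
  have injh: "inj_on hchi F" and indh: "V.independent (hchi ` F)"
    using delta_indep[OF finF, of hchi] hchi_single by auto
  have injc: "inj_on (chi \<alpha>) F" and indc: "V.independent (chi \<alpha> ` F)"
    using delta_indep[OF finF, of "chi \<alpha>"] chi_single by auto
  have dimh: "V.dim Uh = card F"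
    unfolding Uh_def using V.dim_span_eq_card_independent[OF indh] card_image[OF injh] by simp
  have Sc: "Sm \<alpha> ` (chi \<alpha> ` F) = sv \<alpha> ` F"
    using S_chi unfolding F_def by (auto simp: image_image)
  have svh: "V.span (sv \<alpha> ` F) = Uh"
  proof
    show "V.span (sv \<alpha> ` F) \<subseteq> Uh"
      unfolding Uh_def using sv_span[of _ \<alpha>] unfolding F_def
      by (intro V.span_minimal) (auto simp: V.subspace_span)
    show "Uh \<subseteq> V.span (sv \<alpha> ` F)"
      unfolding Uh_def using hchi_span[of _ \<alpha>] unfolding F_def
      by (intro V.span_minimal) (auto simp: V.subspace_span)
  qed
  have SUc: "Sm \<alpha> ` Uc = Uh"
    unfolding Uc_def LS.span_image[symmetric] Sc svh ..
  have finsv: "finite (sv \<alpha> ` F)" using finF by simp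
  have c1: "card (sv \<alpha> ` F) \<le> card F" using card_image_le[OF finF] .
  have c2: "card F \<le> card (sv \<alpha> ` F)"
    using V.dim_le_card[of Uh "sv \<alpha> ` F"] svh finsv dimh by simp
  have indsv: "V.independent (sv \<alpha> ` F)"
  proof (rule ccontr)
    assume "\<not> V.independent (sv \<alpha> ` F)"
    then obtain a where a: "a \<in> sv \<alpha> ` F" "a \<in> V.span (sv \<alpha> ` F - {a})"
      unfolding V.dependent_def by blast
    have "sv \<alpha> ` F \<subseteq> V.span (sv \<alpha> ` F - {a})"
    proof
      fix x assume x: "x \<in> sv \<alpha> ` F"
      show "x \<in> V.span (sv \<alpha> ` F - {a})"
      proof (cases "x = a")
        case True
        then show ?thesis using a(2) by simp
      next
        case False
        then have "x \<in> sv \<alpha> ` F - {a}" using x by simp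
        then show ?thesis by (rule V.span_base)
      qed
    qed
    then have "Uh \<subseteq> V.span (sv \<alpha> ` F - {a})"
      unfolding svh[symmetric] by (intro V.span_minimal) (auto simp: V.subspace_span)
    then have "V.dim Uh \<le> card (sv \<alpha> ` F - {a})"
      by (rule V.dim_le_card) (use finsv in simp)
    also have "\<dots> < card (sv \<alpha> ` F)" using a(1) finsv card_gt_0_iff by (metis card_Diff1_less)
    finally show False using c1 dimh by simp
  qed
  have cardc: "card (chi \<alpha> ` F) = card F" using card_image[OF injc] .
  have "card (Sm \<alpha> ` (chi \<alpha> ` F)) = card (chi \<alpha> ` F)"
    unfolding Sc cardc using c1 c2 by simp
  then have injS0: "inj_on (Sm \<alpha>) (chi \<alpha> ` F)"
    using eq_card_imp_inj_on[of "chi \<alpha> ` F" "Sm \<alpha>"] finF by simp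
  have injS: "inj_on (Sm \<alpha>) Uc"
    unfolding Uc_def using LS.inj_on_span_iff_independent_image[of "chi \<alpha> ` F"] Sc indsv injS0 by simp
  have QS: "Qm \<alpha> (Sm \<alpha> g) = Qm \<alpha> g" if g: "g \<in> Uc" for g
  proof -
    interpret LD: Vector_Spaces.linear stat_scale stat_scale "\<lambda>x. Qm \<alpha> (Sm \<alpha> x) - Qm \<alpha> x"
      unfolding Vector_Spaces.linear_iff using vs
      by (simp add: LS.add LS.scale LQ.add LQ.scale LQ.diff V.scale_right_diff_distrib)
    have "Qm \<alpha> (Sm \<alpha> g) - Qm \<alpha> g = 0"
    proof (rule LD.eq_0_on_span[of "chi \<alpha> ` F"])
      show "g \<in> V.span (chi \<alpha> ` F)" using g unfolding Uc_def .
      fix b assume "b \<in> chi \<alpha> ` F"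
      then obtain p where p: "p \<in> F" "b = chi \<alpha> p" by blast
      show "Qm \<alpha> (Sm \<alpha> b) - Qm \<alpha> b = 0"
        using p S_chi Q_sv unfolding F_def by simp
    qed
    then show ?thesis by simp
  qed
  have img: "Sm \<alpha> ` (AH_space \<alpha>) = IH_space \<alpha>"
  proof
    show "Sm \<alpha> ` AH_space \<alpha> \<subseteq> IH_space \<alpha>"
      unfolding AH IH using SUc QS by auto
    show "IH_space \<alpha> \<subseteq> Sm \<alpha> ` AH_space \<alpha>"
    proof
      fix h assume "h \<in> IH_space \<alpha>"
      then have h: "h \<in> Uh" "Qm \<alpha> h = 0" unfolding IH by auto
      then obtain g where g: "g \<in> Uc" "h = Sm \<alpha> g" using SUc by blast
      then have "Qm \<alpha> g = 0" using QS h by simp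
      then show "h \<in> Sm \<alpha> ` AH_space \<alpha>" unfolding AH using g by blast
    qed
  qed
  have "V.dim (Sm \<alpha> ` AH_space \<alpha>) = V.dim (AH_space \<alpha>)"
    by (rule dim_inj_image[OF S_lin injS[unfolded Uc_def]]) (auto simp: AH Uc_def)
  then show ?thesis unfolding img .
qed

end
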